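(* Let $g_n:=n^{3/2}$ for $n\in\mathbb{N}_0$, and define the sequence $\{\zeta_n\}_{n\in\mathbb{N}}$ by $\zeta_1:=\frac{4g_2-g_3}{g_1}=8\sqrt2-3\sqrt3$ and, for $n\ge2$, \[ \zeta_n:=\frac{g_{n+1}}{g_n}\left(4-\frac{g_{n+2}}{g_{n+1}}-\frac{g_{n-1}}{g_n}-\frac{g_{n+1}}{g_n}\frac{1}{\zeta_{n-1}}\right). \] Then the sequence is well defined (i.e. $\zeta_n\ne0$ for all $n$) and for all $n\in\mathbb{N}$, \[ \Big(1+\frac2n\Big)^{3/2}<\zeta_n<\Big(1+\frac3n\Big)^{3/2}. \] In particular $\zeta_n>0$ for all $n\in\mathbb{N}$. *)

theory Defs
  imports Complex_Main
begin

definition g :: "nat \<Rightarrow> real" where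
  "g n = real n powr (3/2)"

text \<open>zeta is indexed from 1; the value at 0 is an unused dummy (0).
  For n >= 2 the recursion uses HOL division (x / 0 = 0), so well-definedness
  is asserted separately as zeta n \<noteq> 0.\<close>
fun zeta :: "nat \<Rightarrow> real" where
  "zeta 0 = 0"
| "zeta (Suc 0) = (4 * g 2 - g 3) / g 1"
| "zeta (Suc (Suc m)) =
     (let n = Suc (Suc m) in
      g (n+1) / g n * (4 - g (n+2) / g (n+1) - g (n-1) / g n
                       - g (n+1) / g n * (1 / zeta (n-1))))"

end

theory Submission imports Defs begin


lemma p_eq: "0 \<le> (t::real) \<Longrightarrow> t powr (3/2) = sqrt (t^3)"
proof -
  assume t: "0 \<le> t"
  have "t powr (3/2) = t powr (1 + 1/2)" by simp
  also have "\<dots> = t powr 1 * t powr (1/2)" by (rule powr_add)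
  also have "\<dots> = t * sqrt t" using t by (simp add: powr_half_sqrt)
  also have "\<dots> = sqrt (t^3)" using t by (simp add: real_sqrt_mult power3_eq_cube)
  finally show ?thesis .
qed

lemma upA: assumes "0 \<le> (u::real)" shows "(1+u) powr (3/2) \<le> 1 + 3/2*u + 3/8*u^2"
proof -
  have "(1+u)^3 \<le> (1 + 3/2*u + 3/8*u^2)^2"
  proof -
    have "(1 + 3/2*u + 3/8*u^2)^2 - (1+u)^3 = u^3/8 + 9*u^4/64" by (simp add: power2_eq_square power3_eq_cube power4_eq_xxxx algebra_simps)
    moreover have "0 \<le> u^3/8 + 9*u^4/64" using assms by simp
    ultimately show ?thesis by linarith
  qed
  then show ?thesis using assms by (simp add: p_eq real_le_lsqrt)
qed

lemma upB: assumes "0 \<le> (v::real)" "v \<le> 1/2" shows "(1-v) powr (3/2) \<le> 1 - 3/2*v + 3/8*v^2 + 1/4*v^3"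
proof -
  have "(1-v)^3 \<le> (1 - 3/2*v + 3/8*v^2 + 1/4*v^3)^2"
  proof -
    have e: "(1 - 3/2*v + 3/8*v^2 + 1/4*v^3)^2 - (1-v)^3 = v^3*(3/8 - 39/64*v + 3/16*v^2 + 1/16*v^3)"
      by (simp add: power2_eq_square power3_eq_cube power4_eq_xxxx algebra_simps)
    have a: "0 \<le> 3/8 - 39/64*v + 3/16*v^2 + 1/16*v^3" using assms by simp
    have b: "0 \<le> v^3" using assms by simp
    have "0 \<le> v^3*(3/8 - 39/64*v + 3/16*v^2 + 1/16*v^3)" using mult_nonneg_nonneg[OF b a] .
    then show ?thesis using e by linarith
  qed
  moreover have "0 \<le> 1 - 3/2*v + 3/8*v^2 + 1/4*v^3" using assms
    using zero_le_power2[of v] zero_le_power[OF assms(1), of 3] by linarith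
  ultimately show ?thesis using assms by (simp add: p_eq real_le_lsqrt)
qed

lemma lowC: assumes "-3/4 \<le> (u::real)" "u \<le> 2" shows "1 + 3/2*u + 3/8*u^2 - 1/16*u^3 \<le> (1+u) powr (3/2)"
proof -
  have "(1 + 3/2*u + 3/8*u^2 - 1/16*u^3)^2 \<le> (1+u)^3"
  proof -
    have e: "(1+u)^3 - (1 + 3/2*u + 3/8*u^2 - 1/16*u^3)^2 = u^4*((12 + 12*u - u^2)/256)"
      by (simp add: power2_eq_square power3_eq_cube power4_eq_xxxx algebra_simps)
    have a: "0 \<le> (u+3/4)*(2-u)" using assms by simp
    have b: "(u+3/4)*(2-u) = -(u^2) + 5/4*u + 3/2" by (simp add: field_simps power2_eq_square)
    have "0 \<le> 12 + 12*u - u^2" using a b assms by linarith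
    then have "0 \<le> u^4*((12 + 12*u - u^2)/256)" by simp
    then show ?thesis using e by linarith
  qed
  then show ?thesis using assms by (simp add: p_eq real_le_rsqrt)
qed


definition T3 :: "real \<Rightarrow> real" where "T3 u = 1 + 3/2*u + 3/8*u^2 - 1/16*u^3"

lemma K2poly: fixes x a b c :: real assumes "a*x=1" "b*(x+1)=1" "c*(x+2)=1"
  shows "16*x^3*(x+1)^3*(x+2)^3*(T3 b + T3 (-a) + T3 (-(2*x+1)*a*c) + T3 (2*b) - 4)
     = 9 + 105*x + 117*x^2 + 96*x^3 + 447*x^4 + 639*x^5 + 336*x^6 + 60*x^7"
  using assms unfolding T3_def by algebra

lemma K2: assumes "(x::real) \<ge> 2"
  shows "4 \<le> ((x+2)/(x+1)) powr (3/2) + ((x-1)/x) powr (3/2) + (((x-1)*(x+1))/(x*(x+2))) powr (3/2) + ((x+3)/(x+1)) powr (3/2)"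
proof -
  have p: "x > 0" "x + 1 > 0" "x + 2 > 0" "x*(x+2) > 0" using assms by auto
  define a where "a = 1/x"
  define b where "b = 1/(x+1)"
  define c where "c = 1/(x+2)"
  have abc: "a*x=1" "b*(x+1)=1" "c*(x+2)=1" using p by (auto simp: a_def b_def c_def)
  have e1: "(x+2)/(x+1) = 1 + b" "(x-1)/x = 1 + (-a)"
     "((x-1)*(x+1))/(x*(x+2)) = 1 + (-(2*x+1)*a*c)" "(x+3)/(x+1) = 1 + 2*b"
    using p by (auto simp: field_simps a_def b_def c_def)
  have r1: "-3/4 \<le> b" "b \<le> 2" using assms by (auto simp: field_simps b_def)
  have r2: "-3/4 \<le> -a" "-a \<le> 2" using assms by (auto simp: field_simps a_def)
  have q: "(2*x+1)*a*c = (2*x+1)/(x*(x+2))" by (simp add: a_def c_def)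
  have "(2*x+1)/(x*(x+2)) \<le> 3/4"
  proof -
    have h: "x*x \<ge> 2*x" using mult_right_mono[OF assms, of x] p by simp
    have "3*(x*(x+2)) = 3*(x*x) + 6*x" "(2*x+1)*4 = 8*x+4" by (simp_all add: algebra_simps)
    then have "(2*x+1)*4 \<le> 3*(x*(x+2))" using h assms by linarith
    then show ?thesis using p by (simp add: divide_le_eq)
  qed
  moreover have "0 \<le> (2*x+1)/(x*(x+2))" using p by simp
  moreover have "-(2*x+1)*a*c = -((2*x+1)/(x*(x+2)))" using q by (metis minus_mult_left)
  ultimately have r3: "-3/4 \<le> -(2*x+1)*a*c" "-(2*x+1)*a*c \<le> 2" by linarith+
  have r4: "-3/4 \<le> 2*b" "2*b \<le> 2" using assms by (auto simp: field_simps b_def)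
  have D: "0 < 16*x^3*(x+1)^3*(x+2)^3" using p by simp
  have N: "0 \<le> 9 + 105*x + 117*x^2 + 96*x^3 + 447*x^4 + 639*x^5 + 336*x^6 + 60*x^7" using p by simp
  have "0 \<le> T3 b + T3 (-a) + T3 (-(2*x+1)*a*c) + T3 (2*b) - 4"
    using K2poly[OF abc] D N by (metis zero_le_mult_iff not_less)
  then show ?thesis unfolding e1
    using lowC[OF r1] lowC[OF r2] lowC[OF r3] lowC[OF r4] unfolding T3_def by linarith
qed

lemma K1poly: fixes x a b :: real assumes "a*x=1" "b*(x+1)=1"
  shows "8*x^3*(x+1)^2*((1 + 3/2*b + 3/8*b^2) + (1 - 3/2*a + 3/8*a^2 + 1/4*a^3) - 2)
     = -(6*x^3 + 4*x^2 - 7*x - 2)"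
  using assms by algebra

lemma K1: assumes "(x::real) \<ge> 2"
  shows "((x+2)/(x+1)) powr (3/2) + ((x-1)/x) powr (3/2) \<le> 2"
proof -
  have p: "x > 0" "x + 1 > 0" using assms by auto
  define a where "a = 1/x"
  define b where "b = 1/(x+1)"
  have ab: "a*x=1" "b*(x+1)=1" using p by (auto simp: a_def b_def)
  have e1: "(x+2)/(x+1) = 1 + b" "(x-1)/x = 1 - a" using p by (auto simp: field_simps a_def b_def)
  have r1: "0 \<le> b" using p by (auto simp: b_def)
  have r2: "0 \<le> a" "a \<le> 1/2" using assms by (auto simp: field_simps a_def)
  have Q: "0 \<le> 6*x^3 + 4*x^2 - 7*x - 2"
  proof -
    have "x*x \<ge> 2*x" using mult_right_mono[OF assms, of x] p by simp
    then have "x*x \<ge> 2*2" using assms by linarith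
    then have "x*(x*x) \<ge> x*4" using p by simp
    then have "x^3 \<ge> 4*x" by (simp add: power3_eq_cube algebra_simps)
    moreover have "x^2 \<ge> 0" by simp
    ultimately show ?thesis using assms by linarith
  qed
  have D: "0 < 8*x^3*(x+1)^2" using p by simp
  have "(1 + 3/2*b + 3/8*b^2) + (1 - 3/2*a + 3/8*a^2 + 1/4*a^3) - 2 \<le> 0"
  proof (rule ccontr)
    assume "\<not> ?thesis"
    then have "0 < 8*x^3*(x+1)^2*((1 + 3/2*b + 3/8*b^2) + (1 - 3/2*a + 3/8*a^2 + 1/4*a^3) - 2)"
      using D by simp
    then show False using K1poly[OF ab] Q by linarith
  qed
  then show ?thesis unfolding e1 using upA[OF r1] upB[OF r2] by linarith
qed


lemma step_alg:
  fixes Pm P0 P1 P2 P3 z :: real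
  assumes pos: "0 < Pm" "0 < P0" "0 < P1" "0 < P2" "0 < P3"
    and IH: "P1/Pm < z" "z < P2/Pm"
    and K1: "P2/P1 + Pm/P0 \<le> 2"
    and K2: "4 \<le> P2/P1 + Pm/P0 + (Pm*P1)/(P0*P2) + P3/P1"
  shows "P2/P0 < P1/P0 * (4 - P2/P1 - Pm/P0 - P1/P0 * (1/z)) \<and>
         P1/P0 * (4 - P2/P1 - Pm/P0 - P1/P0 * (1/z)) < P3/P0"
proof -
  have zp: "0 < z" proof -
    have "0 < P1/Pm" using pos by simp
    then show ?thesis using IH by linarith
  qed
  have r1: "1/z < Pm/P1" using IH(1) zp pos by (simp add: field_simps)
  have r2: "Pm/P2 < 1/z" using IH(2) zp pos by (simp add: field_simps)
  have A: "0 < P1/P0" using pos by simp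
  let ?K = "4 - P2/P1 - Pm/P0"
  have c1: "P1/P0 * (Pm/P1) = Pm/P0" using pos by simp
  have c2: "P1/P0 * (Pm/P2) = (Pm*P1)/(P0*P2)" using pos by simp
  have l1: "?K - P1/P0 * (Pm/P1) < ?K - P1/P0 * (1/z)" using mult_strict_left_mono[OF r1 A] by linarith
  have l2: "?K - P1/P0 * (1/z) < ?K - P1/P0 * (Pm/P2)" using mult_strict_left_mono[OF r2 A] by linarith
  have l3: "P2/P1 \<le> ?K - P1/P0 * (Pm/P1)" using K1 c1 by linarith
  have l4: "?K - P1/P0 * (Pm/P2) \<le> P3/P1" using K2 c2 by linarith
  have "P2/P0 = P1/P0 * (P2/P1)" "P3/P0 = P1/P0 * (P3/P1)" using pos by simp_all
  moreover have "P1/P0 * (P2/P1) < P1/P0 * (?K - P1/P0 * (1/z))"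
    using mult_strict_left_mono[of "P2/P1" "?K - P1/P0 * (1/z)", OF _ A] l1 l3 by linarith
  moreover have "P1/P0 * (?K - P1/P0 * (1/z)) < P1/P0 * (P3/P1)"
    using mult_strict_left_mono[of "?K - P1/P0 * (1/z)" "P3/P1", OF _ A] l2 l4 by linarith
  ultimately show ?thesis by simp
qed

lemma p_mul: "0 \<le> (t::real) \<Longrightarrow> t powr (3/2) = t * sqrt t"
  using p_eq by (simp add: real_sqrt_mult power3_eq_cube)

lemma gdiv: "0 < a \<Longrightarrow> 0 < b \<Longrightarrow> g a / g b = (real a / real b) powr (3/2)"
  by (simp add: g_def powr_divide)

lemma gpos: "0 < a \<Longrightarrow> 0 < g a" by (simp add: g_def)

lemma base: "3 * sqrt 3 < zeta 1 \<and> zeta 1 < 8"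
proof -
  have "g 1 = 1" "g 2 = 2 * sqrt 2" "g 3 = 3 * sqrt 3" by (simp_all add: g_def p_mul)
  then have z: "zeta 1 = 8 * sqrt 2 - 3 * sqrt 3" by simp
  have "sqrt 108 < sqrt 128" by simp
  moreover have "sqrt 108 = 6 * sqrt 3" using real_sqrt_mult[of 36 3] by simp
  moreover have "sqrt 128 = 8 * sqrt 2" using real_sqrt_mult[of 64 2] by simp
  moreover have "sqrt 2 < 3/2"
  proof -
    have "(sqrt 2)^2 < (3/2)^2" by (simp add: power2_eq_square)
    then show ?thesis by (rule power_less_imp_less_base) simp
  qed
  moreover have "17/10 < sqrt 3" by (rule real_less_rsqrt) (simp add: power2_eq_square)
  ultimately show ?thesis using z by linarith
qed

theorem lemma3p1:
  shows "\<forall>n::nat. n \<ge> 1 \<longrightarrow>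
           zeta n \<noteq> 0 \<and>
           (1 + 2 / real n) powr (3/2) < zeta n \<and>
           zeta n < (1 + 3 / real n) powr (3/2) \<and>
           zeta n > 0"
proof -
  have main: "(1 + 2 / real (Suc m)) powr (3/2) < zeta (Suc m) \<and>
           zeta (Suc m) < (1 + 3 / real (Suc m)) powr (3/2)" for m
  proof (induction m)
    case 0
    have "(3::real) powr (3/2) = 3 * sqrt 3" "(4::real) powr (3/2) = 8"
      by (simp_all add: p_mul)
    then show ?case using base by simp
  next
    case (Suc m)
    define n where "n = Suc (Suc m)"
    define x where "x = real n"
    have x2: "x \<ge> 2" unfolding x_def n_def by simp
    have nm: "n - 1 = Suc m" unfolding n_def by simp
    have rr: "real (n-1) = x - 1" "real (n+1) = x + 1" "real (n+2) = x + 2" "real (n+3) = x + 3"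
      unfolding x_def n_def by simp_all
    have zeq: "zeta n = g (n+1) / g n * (4 - g (n+2) / g (n+1) - g (n-1) / g n
                       - g (n+1) / g n * (1 / zeta (n-1)))"
      unfolding n_def by (simp add: Let_def)
    have pos: "0 < g (n-1)" "0 < g n" "0 < g (n+1)" "0 < g (n+2)" "0 < g (n+3)"
      unfolding n_def by (simp_all add: gpos)
    have e1: "1 + 2 / real (Suc m) = real (n+1) / real (n-1)"
      using x2 unfolding rr nm[symmetric] by (simp add: field_simps)
    have e2: "1 + 3 / real (Suc m) = real (n+2) / real (n-1)"
      using x2 unfolding rr nm[symmetric] by (simp add: field_simps)
    have gd1: "g (n+1) / g (n-1) = (real (n+1) / real (n-1)) powr (3/2)"
      by (rule gdiv) (simp_all add: n_def)
    have gd2: "g (n+2) / g (n-1) = (real (n+2) / real (n-1)) powr (3/2)"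
      by (rule gdiv) (simp_all add: n_def)
    have IH: "g (n+1) / g (n-1) < zeta (n-1)" "zeta (n-1) < g (n+2) / g (n-1)"
    proof -
      have IH0: "(real (n+1) / real (n-1)) powr (3/2) < zeta (n-1) \<and> zeta (n-1) < (real (n+2) / real (n-1)) powr (3/2)"
        using Suc.IH[unfolded e1 e2] unfolding nm by simp
      then show "g (n+1) / g (n-1) < zeta (n-1)" "zeta (n-1) < g (n+2) / g (n-1)"
        unfolding gd1 gd2 by simp_all
    qed
    have n1: "0 < n - 1" "0 < n" unfolding n_def by simp_all
    have gA: "g (n+2) / g (n+1) = ((x+2)/(x+1)) powr (3/2)"
      using gdiv[of "n+2" "n+1"] by (simp add: x_def[symmetric] add.commute)
    have gB: "g (n-1) / g n = ((x-1)/x) powr (3/2)"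
      using gdiv[OF n1] rr(1) by (simp add: x_def[symmetric] add.commute)
    have gC: "g (n+3) / g (n+1) = ((x+3)/(x+1)) powr (3/2)"
      using gdiv[of "n+3" "n+1"] by (simp add: x_def[symmetric] add.commute)
    have K1': "g (n+2) / g (n+1) + g (n-1) / g n \<le> 2"
      using K1[OF x2] unfolding gA gB .
    have m4: "(g (n-1) * g (n+1)) / (g n * g (n+2)) = (((x-1)*(x+1))/(x*(x+2))) powr (3/2)"
    proof -
      have r: "real (n - Suc 0) = x - 1" unfolding x_def n_def by simp
      show ?thesis using x2 by (simp add: g_def rr r x_def[symmetric] powr_divide powr_mult add.commute)
    qed
    have K2': "4 \<le> g (n+2) / g (n+1) + g (n-1) / g n + (g (n-1) * g (n+1)) / (g n * g (n+2)) + g (n+3) / g (n+1)"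
      using K2[OF x2] unfolding m4 gA gB gC .
    have S: "g (n+2) / g n < zeta n \<and> zeta n < g (n+3) / g n"
      unfolding zeq using step_alg[OF pos IH K1' K2'] .
    have e3: "1 + 2 / real (Suc (Suc m)) = real (n+2) / real n"
      "1 + 3 / real (Suc (Suc m)) = real (n+3) / real n"
      using x2 unfolding rr n_def[symmetric] x_def[symmetric] by (simp_all add: field_simps)
    show ?case unfolding e3 using S by (simp add: gdiv n_def)
  qed
  show ?thesis
  proof (intro allI impI)
    fix n :: nat assume "n \<ge> 1"
    then obtain m where n: "n = Suc m" by (cases n) auto
    have "0 < 1 + 2 / real n" by (simp add: add_pos_nonneg)
    then have "0 < (1 + 2 / real n) powr (3/2)" by simp
    then show "zeta n \<noteq> 0 \<and> (1 + 2 / real n) powr (3/2) < zeta n \<and>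
           zeta n < (1 + 3 / real n) powr (3/2) \<and> zeta n > 0"
    proof -
      have M: "(1 + 2 / real n) powr (3/2) < zeta n \<and> zeta n < (1 + 3 / real n) powr (3/2)"
        using main[of m] unfolding n .
      then have "0 < zeta n" using \<open>0 < (1 + 2 / real n) powr (3/2)\<close> by linarith
      then show ?thesis using M by simp
    qed
  qed
qed

end
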